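(* Let $\{\tilde{\mathbf M}_t\}$ be a forward-in-time continuous-time Markov jump process on $\mathcal N$ whose generator on each interval $(t_d,t_{d+1}]$ is $\tilde{\boldsymbol\Lambda}^d$, started from any initial distribution. Let $C_t$ denote the number of type-$c$ haplotypes in $\tilde{\mathbf M}_t$, i.e. $C_t=n^{(c)}$ when $\tilde{\mathbf M}_t=\mathbf n$. Then $\{C_t\}$ is itself a (forward-in-time) Markov jump process on $\{0,1,\dots,n\}$ whose generator on $(t_d,t_{d+1}]$ is $\boldsymbol\Gamma^d$. Moreover, for all $m,m'\in\{0,\dots,n\}$ and $s\ge0$, and provided $\rho>0$, $$\gamma^d_m\big[e^{\boldsymbol\Gamma^d s}\big]_{m,m'}=\gamma^d_{m'}\big[e^{\boldsymbol\Gamma^d s}\big]_{m',m},$$ where $(\gamma^d_0,\dots,\gamma^d_n)$ is the stationary distribution of $\boldsymbol\Gamma^d$.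
   Context: **Two-locus model.** - There are two loci, the left ("$a$") and the right ("$b$"). Alleles take values in a finite set $\mathcal A$. - Mutation occurs at rate $\theta/2$ per locus per lineage; given a mutation, allele $i$ becomes $j$ with probability $P_{ij}$, where $\mathbf P=(P_{ij})$ is a stochastic matrix on $\mathcal A$. The recombination parameter is $\rho\ge0$. - The population size is piecewise constant: there are times $-\infty=t_{-D}<t_{-D+1}<\dots<t_{-1}<t_0=0$, and on $(t_d,t_{d+1}]$ the scaled size is $\eta_d>0$. **Haplotypes and configurations.** - A haplotype is of type $a$, $b$ or $c$: - type $a$ is $(i,* )$; - type $b$ is $( *,j)$; - type $c$ is $(k,\ell)$; with $i,j,k,\ell\in\mathcal A$ and $*$ denoting a missing allele. - A configuration $\mathbf n=\{n_{i*},n_{*j},n_{k\ell}\}$ records the multiplicities of the haplotypes. Write $n^{(a)}=\sum_i n_{i*}$, $n^{(b)}=\sum_j n_{*j}$, $n^{(c)}=\sum_{k,\ell}n_{k\ell}$ and $n^{(abc)}=(n^{(a)},n^{(b)},n^{(c)})$. - $\mathbf e_h$ is the configuration consisting of a single haplotype $h$. **The space $\mathcal N$ and the generator $\tilde{\boldsymbol\Lambda}^d$.** - Fix $n\ge1$ and let $\mathcal N=\{\mathbf n: n^{(abc)}=(k,k,n-k),\ 0\le k\le n\}$. - $\tilde{\boldsymbol\Lambda}^d$ is the generator matrix indexed by $\mathcal N$. For $\mathbf m\ne\mathbf n$, its entry $\tilde\Lambda^d_{\mathbf n,\mathbf m}$ is the sum of all the following rates (over $i,j,k,l\in\mathcal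 A$) whose listed target equals $\mathbf m$: - target $\mathbf n-\mathbf e_{i*}+\mathbf e_{j*}$, rate $\frac1{\eta_d}n_{i*}\big(\tfrac12 n_{j*}+\sum_{k}n_{jk}\big)+\frac\theta2P_{ij}n_{i*}$; - target $\mathbf n-\mathbf e_{*i}+\mathbf e_{*j}$, rate $\frac1{\eta_d}n_{*i}\big(\tfrac12 n_{*j}+\sum_k n_{kj}\big)+\frac\theta2P_{ij}n_{*i}$; - target $\mathbf n-\mathbf e_{ij}+\mathbf e_{kl}$, rate $\frac1{2\eta_d}n_{ij}n_{kl}+\frac\theta2(\delta_{ik}P_{jl}+\delta_{jl}P_{ik})n_{ij}$; - target $\mathbf n-\mathbf e_{ij}+\mathbf e_{i*}+\mathbf e_{*j}$, rate $\frac\rho2 n_{ij}$; - target $\mathbf n-\mathbf e_{i*}-\mathbf e_{*j}+\mathbf e_{ij}$, rate $\frac1{\eta_d}n_{i*}n_{*j}$. - The diagonal entries are chosen so that each row of $\tilde{\boldsymbol\Lambda}^d$ sums to $0$. **The matrix $\boldsymbol\Gamma^d$.** $\boldsymbol\Gamma^d$ is the tridiagonal generator indexed by $\{0,1,\dots,n\}$ with - $\Gamma^d_{m,m-1}=\frac\rho2 m$, - $\Gamma^d_{m,m+1}=\frac{(n-m)^2}{\eta_d}$, - $\Gamma^d_{m,m}=-\Gamma^d_{m,m-1}-\Gamma^d_{m,m+1}$. *)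

theory Defs
  imports "HOL-Probability.Probability" "HOL-Library.Multiset"
begin

text \<open>Type a haplotype (i,*) is HA i, type b haplotype (*,j) is HB j,
  type c haplotype (k,l) is HC k l. A configuration is a multiset of haplotypes.\<close>

datatype 'a hap = HA 'a | HB 'a | HC 'a 'a

fun is_a :: "'a hap \<Rightarrow> bool" where
  "is_a (HA _) = True" | "is_a _ = False"
fun is_b :: "'a hap \<Rightarrow> bool" where
  "is_b (HB _) = True" | "is_b _ = False"
fun is_c :: "'a hap \<Rightarrow> bool" where
  "is_c (HC _ _) = True" | "is_c _ = False"

definition na :: "'a hap multiset \<Rightarrow> nat" where
  "na c = size (filter_mset is_a c)"
definition nb :: "'a hap multiset \<Rightarrow> nat" where
  "nb c = size (filter_mset is_b c)"
definition nc :: "'a hap multiset \<Rightarrow> nat" where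
  "nc c = size (filter_mset is_c c)"

definition haps :: "'a set \<Rightarrow> 'a hap set" where
  "haps A = HA ` A \<union> HB ` A \<union> {HC i j | i j. i \<in> A \<and> j \<in> A}"

definition confN :: "'a set \<Rightarrow> nat \<Rightarrow> 'a hap multiset set" where
  "confN A n = {c. set_mset c \<subseteq> haps A \<and>
      (\<exists>k\<le>n. na c = k \<and> nb c = k \<and> nc c = n - k)}"

definition mid :: "'s \<Rightarrow> 's \<Rightarrow> real" where
  "mid x y = (if x = y then 1 else 0)"

definition mmult :: "'s set \<Rightarrow> ('s \<Rightarrow> 's \<Rightarrow> real) \<Rightarrow> ('s \<Rightarrow> 's \<Rightarrow> real) \<Rightarrow> 's \<Rightarrow> 's \<Rightarrow> real" where
  "mmult S M1 M2 x y = (\<Sum>z\<in>S. M1 x z * M2 z y)"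

fun mpow :: "'s set \<Rightarrow> ('s \<Rightarrow> 's \<Rightarrow> real) \<Rightarrow> nat \<Rightarrow> 's \<Rightarrow> 's \<Rightarrow> real" where
  "mpow S Q 0 = mid"
| "mpow S Q (Suc k) = mmult S (mpow S Q k) Q"

definition mexp :: "'s set \<Rightarrow> ('s \<Rightarrow> 's \<Rightarrow> real) \<Rightarrow> real \<Rightarrow> 's \<Rightarrow> 's \<Rightarrow> real" where
  "mexp S Q s x y = (\<Sum>k. s ^ k / fact k * mpow S Q k x y)"

text \<open>Off-diagonal rate of the generator tilde-Lambda^d (eta = eta_d): the sum
  of all listed rates whose target equals m.\<close>
definition lam_off :: "'a set \<Rightarrow> ('a \<Rightarrow> 'a \<Rightarrow> real) \<Rightarrow> real \<Rightarrow> real \<Rightarrow> real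
    \<Rightarrow> 'a hap multiset \<Rightarrow> 'a hap multiset \<Rightarrow> real" where
  "lam_off A P \<theta> \<rho> \<eta> nn mm =
     (\<Sum>i\<in>A. \<Sum>j\<in>A. if mm = nn - {#HA i#} + {#HA j#} then
        1/\<eta> * real (count nn (HA i)) *
          (1/2 * real (count nn (HA j)) + (\<Sum>k\<in>A. real (count nn (HC j k))))
        + \<theta>/2 * P i j * real (count nn (HA i)) else 0)
   + (\<Sum>i\<in>A. \<Sum>j\<in>A. if mm = nn - {#HB i#} + {#HB j#} then
        1/\<eta> * real (count nn (HB i)) *
          (1/2 * real (count nn (HB j)) + (\<Sum>k\<in>A. real (count nn (HC k j))))
        + \<theta>/2 * P i j * real (count nn (HB i)) else 0)
   + (\<Sum>i\<in>A. \<Sum>j\<in>A. \<Sum>k\<in>A. \<Sum>l\<in>A. if mm = nn - {#HC i j#} + {#HC k l#} then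
        1/(2*\<eta>) * real (count nn (HC i j)) * real (count nn (HC k l))
        + \<theta>/2 * ((if i = k then P j l else 0) + (if j = l then P i k else 0))
            * real (count nn (HC i j)) else 0)
   + (\<Sum>i\<in>A. \<Sum>j\<in>A. if mm = nn - {#HC i j#} + {#HA i#} + {#HB j#} then
        \<rho>/2 * real (count nn (HC i j)) else 0)
   + (\<Sum>i\<in>A. \<Sum>j\<in>A. if mm = nn - {#HA i#} - {#HB j#} + {#HC i j#} then
        1/\<eta> * real (count nn (HA i)) * real (count nn (HB j)) else 0)"

definition Lam :: "'a set \<Rightarrow> ('a \<Rightarrow> 'a \<Rightarrow> real) \<Rightarrow> real \<Rightarrow> real \<Rightarrow> nat \<Rightarrow> real
    \<Rightarrow> 'a hap multiset \<Rightarrow> 'a hap multiset \<Rightarrow> real" where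
  "Lam A P \<theta> \<rho> n \<eta> nn mm =
     (if nn = mm then - (\<Sum>m'\<in>confN A n - {nn}. lam_off A P \<theta> \<rho> \<eta> nn m')
      else lam_off A P \<theta> \<rho> \<eta> nn mm)"

definition Gam :: "real \<Rightarrow> nat \<Rightarrow> real \<Rightarrow> nat \<Rightarrow> nat \<Rightarrow> real" where
  "Gam \<rho> n \<eta> m m' =
     (if m' + 1 = m then \<rho>/2 * real m
      else if m' = m + 1 then real ((n - m)^2) / \<eta>
      else if m' = m then - (\<rho>/2 * real m + real ((n - m)^2) / \<eta>)
      else 0)"

text \<open>Epochs are indexed by d in {-D..-1}; epoch d is (t d, t (d+1)], with
  t (-D) = -infinity (the value t (-D) is ignored) and t 0 = 0.
  elen gives the length of the overlap of (u,v] with epoch d.\<close>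
definition elen :: "nat \<Rightarrow> (int \<Rightarrow> real) \<Rightarrow> int \<Rightarrow> real \<Rightarrow> real \<Rightarrow> real" where
  "elen D t d u v =
     max 0 (min v (t (d+1)) - (if d = - int D then u else max u (t d)))"

text \<open>Transition matrix from time u to time v (u <= v <= 0) of the jump process
  whose generator on epoch d is Q d.\<close>
definition ptrans :: "'s set \<Rightarrow> (int \<Rightarrow> 's \<Rightarrow> 's \<Rightarrow> real) \<Rightarrow> nat \<Rightarrow> (int \<Rightarrow> real)
    \<Rightarrow> real \<Rightarrow> real \<Rightarrow> 's \<Rightarrow> 's \<Rightarrow> real" where
  "ptrans S Q D t u v =
     foldr (\<lambda>d M. mmult S (mexp S (Q d) (elen D t d u v)) M) [- int D..-1] mid"

text \<open>A process X on [T0,0] (on probability space Pr, values in S) is a Markov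
  jump process with generator Q d on epoch d, expressed through its
  finite-dimensional distributions.\<close>
definition markov_fdd :: "'w measure \<Rightarrow> 's set \<Rightarrow> (int \<Rightarrow> 's \<Rightarrow> 's \<Rightarrow> real) \<Rightarrow> nat
    \<Rightarrow> (int \<Rightarrow> real) \<Rightarrow> real \<Rightarrow> (real \<Rightarrow> 'w \<Rightarrow> 's) \<Rightarrow> bool" where
  "markov_fdd Pr S Q D t T0 X \<longleftrightarrow>
     (\<forall>K (s :: nat \<Rightarrow> real) (x :: nat \<Rightarrow> 's).
        T0 \<le> s 0 \<and> s K \<le> 0 \<and> (\<forall>i<K. s i \<le> s (Suc i)) \<and> (\<forall>i\<le>K. x i \<in> S) \<longrightarrow>
        measure Pr {\<omega> \<in> space Pr. \<forall>i\<le>K. X (s i) \<omega> = x i}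
        = measure Pr {\<omega> \<in> space Pr. X (s 0) \<omega> = x 0}
          * (\<Prod>i<K. ptrans S Q D t (s i) (s (Suc i)) (x i) (x (Suc i))))"

end

theory Submission
  imports Defs
begin

lemma n_add[simp]: "na (add_mset h x) = na x + (if is_a h then 1 else 0)"
  "nb (add_mset h x) = nb x + (if is_b h then 1 else 0)"
  "nc (add_mset h x) = nc x + (if is_c h then 1 else 0)"
  by (auto simp: na_def nb_def nc_def)

lemma n_del: "h \<in># x \<Longrightarrow> na (x - {#h#}) = na x - (if is_a h then 1 else 0)"
  "h \<in># x \<Longrightarrow> nb (x - {#h#}) = nb x - (if is_b h then 1 else 0)"
  "h \<in># x \<Longrightarrow> nc (x - {#h#}) = nc x - (if is_c h then 1 else 0)"
  by (metis n_add diff_add_inverse2 insert_DiffM)+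

lemma size_abc: "size x = na x + nb x + nc x"
proof (induction x)
  case empty then show ?case by (simp add: na_def nb_def nc_def)
next
  case (add h x) then show ?case by (cases h) auto
qed

lemma haps_fin: "finite A \<Longrightarrow> finite (haps A)"
proof -
  assume f: "finite A"
  have "{HC i j | i j. i \<in> A \<and> j \<in> A} = (\<lambda>(i,j). HC i j) ` (A \<times> A)" by auto
  then show ?thesis using f by (simp add: haps_def)
qed

lemma confN_fin: "finite A \<Longrightarrow> finite (confN A n)"
proof -
  assume f: "finite A"
  have "confN A n \<subseteq> (\<Union>N\<in>{..2*n}. multisets_of_size (haps A) N)"
    by (auto simp: confN_def multisets_of_size_def size_abc)
  then show ?thesis using f haps_fin by (meson finite_UN_I finite_atMost finite_multisets_of_size finite_subset)
qed

lemma count_sum: "finite H \<Longrightarrow> (\<Sum>h\<in>H. real (count x h)) = real (size (filter_mset (\<lambda>h. h \<in> H) x))"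
proof (induction x)
  case empty then show ?case by simp
next
  case (add a x)
  have "(\<Sum>h\<in>H. real (count (add_mset a x) h)) = (\<Sum>h\<in>H. real (count x h) + (if a = h then 1 else 0))"
    by (intro sum.cong) auto
  also have "\<dots> = (\<Sum>h\<in>H. real (count x h)) + (if a \<in> H then 1 else 0)"
    using add.prems by (simp add: sum.distrib)
  finally show ?case using add by auto
qed

lemma sumA: assumes "finite A" "set_mset x \<subseteq> haps A"
  shows "(\<Sum>i\<in>A. real (count x (HA i))) = real (na x)"
    "(\<Sum>i\<in>A. real (count x (HB i))) = real (nb x)"
    "(\<Sum>i\<in>A. \<Sum>j\<in>A. real (count x (HC i j))) = real (nc x)"
proof -
  have "(\<Sum>i\<in>A. real (count x (HA i))) = (\<Sum>h\<in>HA ` A. real (count x h))"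
    by (simp add: sum.reindex inj_on_def)
  also have "\<dots> = real (size (filter_mset (\<lambda>h. h \<in> HA ` A) x))" using assms by (simp add: count_sum)
  also have "filter_mset (\<lambda>h. h \<in> HA ` A) x = filter_mset is_a x"
    by (rule filter_mset_cong) (use assms in \<open>auto simp: haps_def elim: is_a.elims\<close>)
  finally show "(\<Sum>i\<in>A. real (count x (HA i))) = real (na x)" by (simp add: na_def)
  have "(\<Sum>i\<in>A. real (count x (HB i))) = (\<Sum>h\<in>HB ` A. real (count x h))"
    by (simp add: sum.reindex inj_on_def)
  also have "\<dots> = real (size (filter_mset (\<lambda>h. h \<in> HB ` A) x))" using assms by (simp add: count_sum)
  also have "filter_mset (\<lambda>h. h \<in> HB ` A) x = filter_mset is_b x"
    by (rule filter_mset_cong) (use assms in \<open>auto simp: haps_def elim: is_b.elims\<close>)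
  finally show "(\<Sum>i\<in>A. real (count x (HB i))) = real (nb x)" by (simp add: nb_def)
  have "(\<Sum>i\<in>A. \<Sum>j\<in>A. real (count x (HC i j))) = (\<Sum>(i,j)\<in>A\<times>A. real (count x (HC i j)))"
    by (simp add: sum.cartesian_product)
  also have "\<dots> = (\<Sum>h\<in>(\<lambda>(i,j). HC i j) ` (A\<times>A). real (count x h))"
    by (subst sum.reindex) (auto simp: inj_on_def intro!: sum.cong)
  also have "\<dots> = real (size (filter_mset (\<lambda>h. h \<in> (\<lambda>(i,j). HC i j) ` (A\<times>A)) x))"
    using assms by (simp add: count_sum)
  also have "filter_mset (\<lambda>h. h \<in> (\<lambda>(i,j). HC i j) ` (A\<times>A)) x = filter_mset is_c x"
    by (rule filter_mset_cong) (use assms in \<open>auto simp: haps_def elim: is_c.elims\<close>)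
  finally show "(\<Sum>i\<in>A. \<Sum>j\<in>A. real (count x (HC i j))) = real (nc x)" by (simp add: nc_def)
qed

definition "L1 A P \<theta> \<eta> nn mm =
     (\<Sum>i\<in>A. \<Sum>j\<in>A. if mm = nn - {#HA i#} + {#HA j#} then
        1/\<eta> * real (count nn (HA i)) *
          (1/2 * real (count nn (HA j)) + (\<Sum>k\<in>A. real (count nn (HC j k))))
        + \<theta>/2 * P i j * real (count nn (HA i)) else 0)"
definition "L2 A P \<theta> \<eta> nn mm = (\<Sum>i\<in>A. \<Sum>j\<in>A. if mm = nn - {#HB i#} + {#HB j#} then
        1/\<eta> * real (count nn (HB i)) *
          (1/2 * real (count nn (HB j)) + (\<Sum>k\<in>A. real (count nn (HC k j))))
        + \<theta>/2 * P i j * real (count nn (HB i)) else 0)"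
definition "L3 A P \<theta> \<eta> nn mm = (\<Sum>i\<in>A. \<Sum>j\<in>A. \<Sum>k\<in>A. \<Sum>l\<in>A. if mm = nn - {#HC i j#} + {#HC k l#} then
        1/(2*\<eta>) * real (count nn (HC i j)) * real (count nn (HC k l))
        + \<theta>/2 * ((if i = k then P j l else 0) + (if j = l then P i k else 0))
            * real (count nn (HC i j)) else 0)"
definition "L4 A \<rho> nn mm = (\<Sum>i\<in>A. \<Sum>j\<in>A. if mm = nn - {#HC i j#} + {#HA i#} + {#HB j#} then
        \<rho>/2 * real (count nn (HC i j)) else 0)"
definition "L5 A \<eta> nn mm = (\<Sum>i\<in>A. \<Sum>j\<in>A. if mm = nn - {#HA i#} - {#HB j#} + {#HC i j#} then
        1/\<eta> * real (count nn (HA i)) * real (count nn (HB j)) else 0)"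

lemma lam_off_split: "lam_off A P \<theta> \<rho> \<eta> nn mm = L1 A P \<theta> \<eta> nn mm + L2 A P \<theta> \<eta> nn mm
  + L3 A P \<theta> \<eta> nn mm + L4 A \<rho> nn mm + L5 A \<eta> nn mm"
  unfolding lam_off_def L1_def L2_def L3_def L4_def L5_def by simp

lemma nc_c_pos: "HC i j \<in># x \<Longrightarrow> nc x \<ge> 1"
proof -
  assume h: "HC i j \<in># x"
  have "nc x = nc (add_mset (HC i j) (x - {#HC i j#}))" using insert_DiffM[OF h] by simp
  also have "\<dots> = nc (x - {#HC i j#}) + 1" by (simp only: n_add) simp
  finally show ?thesis by simp
qed

lemma L1_0: "nc y \<noteq> nc x \<Longrightarrow> L1 A P \<theta> \<eta> x y = 0"
  unfolding L1_def
proof (intro sum.neutral ballI)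
  fix i j assume ne: "nc y \<noteq> nc x"
  show "(if y = x - {#HA i#} + {#HA j#} then 1/\<eta> * real (count x (HA i)) *
          (1/2 * real (count x (HA j)) + (\<Sum>k\<in>A. real (count x (HC j k))))
        + \<theta>/2 * P i j * real (count x (HA i)) else 0) = 0"
  proof (cases "HA i \<in># x")
    case True
    then have "nc (x - {#HA i#} + {#HA j#}) = nc x" by (simp add: n_del)
    then show ?thesis using ne by auto
  qed (simp add: not_in_iff)
qed

lemma L2_0: "nc y \<noteq> nc x \<Longrightarrow> L2 A P \<theta> \<eta> x y = 0"
  unfolding L2_def
proof (intro sum.neutral ballI)
  fix i j assume ne: "nc y \<noteq> nc x"
  show "(if y = x - {#HB i#} + {#HB j#} then 1/\<eta> * real (count x (HB i)) *
          (1/2 * real (count x (HB j)) + (\<Sum>k\<in>A. real (count x (HC k j))))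
        + \<theta>/2 * P i j * real (count x (HB i)) else 0) = 0"
  proof (cases "HB i \<in># x")
    case True
    then have "nc (x - {#HB i#} + {#HB j#}) = nc x" by (simp add: n_del)
    then show ?thesis using ne by auto
  qed (simp add: not_in_iff)
qed

lemma L3_0: "nc y \<noteq> nc x \<Longrightarrow> L3 A P \<theta> \<eta> x y = 0"
  unfolding L3_def
proof (intro sum.neutral ballI)
  fix i j k l assume ne: "nc y \<noteq> nc x"
  show "(if y = x - {#HC i j#} + {#HC k l#} then
        1/(2*\<eta>) * real (count x (HC i j)) * real (count x (HC k l))
        + \<theta>/2 * ((if i = k then P j l else 0) + (if j = l then P i k else 0))
            * real (count x (HC i j)) else 0) = 0"
  proof (cases "HC i j \<in># x")
    case True
    then have "nc (x - {#HC i j#} + {#HC k l#}) = nc x" using nc_c_pos[OF True] by (simp add: n_del)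
    then show ?thesis using ne by auto
  qed (simp add: not_in_iff)
qed

lemma swap2: "finite Y \<Longrightarrow> finite A \<Longrightarrow>
  (\<Sum>y\<in>Y. \<Sum>i\<in>A. \<Sum>j\<in>A. (if y = t i j then r i j else 0))
   = (\<Sum>i\<in>A. \<Sum>j\<in>A. (if t i j \<in> Y then (r i j::real) else 0))"
proof -
  assume f: "finite Y" "finite A"
  have "(\<Sum>y\<in>Y. \<Sum>i\<in>A. \<Sum>j\<in>A. (if y = t i j then r i j else 0))
     = (\<Sum>i\<in>A. \<Sum>y\<in>Y. \<Sum>j\<in>A. (if y = t i j then r i j else 0))" by (rule sum.swap)
  also have "\<dots> = (\<Sum>i\<in>A. \<Sum>j\<in>A. \<Sum>y\<in>Y. (if y = t i j then r i j else 0))"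
    by (intro sum.cong refl sum.swap)
  also have "\<dots> = (\<Sum>i\<in>A. \<Sum>j\<in>A. (if t i j \<in> Y then (r i j::real) else 0))"
    using f by (simp add: sum.delta)
  finally show ?thesis .
qed

lemma t4_conf: assumes x: "x \<in> confN A n" and ij: "i \<in> A" "j \<in> A" and h: "HC i j \<in># x"
  shows "x - {#HC i j#} + {#HA i#} + {#HB j#} \<in> confN A n \<and> nc (x - {#HC i j#} + {#HA i#} + {#HB j#}) + 1 = nc x"
proof -
  from x obtain k where k: "set_mset x \<subseteq> haps A" "k \<le> n" "na x = k" "nb x = k" "nc x = n - k"
    unfolding confN_def by auto
  have p: "nc x \<ge> 1" using nc_c_pos[OF h] .
  let ?t = "x - {#HC i j#} + {#HA i#} + {#HB j#}"
  have s1: "set_mset ?t \<subseteq> haps A" using k(1) ij by (auto simp: haps_def dest: in_diffD)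
  have e: "?t = add_mset (HB j) (add_mset (HA i) (x - {#HC i j#}))" by simp
  have d: "na (x - {#HC i j#}) = na x" "nb (x - {#HC i j#}) = nb x" "nc (x - {#HC i j#}) = nc x - 1"
    using n_del[OF h] by simp_all
  have s2: "na ?t = k + 1" "nb ?t = k + 1" "nc ?t = n - (k + 1)" "nc ?t + 1 = nc x"
    unfolding e using d k p by simp_all
  have "k + 1 \<le> n" using k p by auto
  then show ?thesis using s1 s2 unfolding confN_def by blast
qed

lemma t5_conf: assumes x: "x \<in> confN A n" and ij: "i \<in> A" "j \<in> A" and h: "HA i \<in># x" "HB j \<in># x"
  shows "x - {#HA i#} - {#HB j#} + {#HC i j#} \<in> confN A n \<and> nc (x - {#HA i#} - {#HB j#} + {#HC i j#}) = nc x + 1"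
proof -
  from x obtain k where k: "set_mset x \<subseteq> haps A" "k \<le> n" "na x = k" "nb x = k" "nc x = n - k"
    unfolding confN_def by auto
  have h2: "HB j \<in># x - {#HA i#}" using h by (simp add: in_diff_count)
  let ?t = "x - {#HA i#} - {#HB j#} + {#HC i j#}"
  have d1: "na (x - {#HA i#}) = na x - 1" "nb (x - {#HA i#}) = nb x" "nc (x - {#HA i#}) = nc x"
    using n_del[OF h(1)] by simp_all
  have "na x = na (add_mset (HA i) (x - {#HA i#}))" using insert_DiffM[OF h(1)] by simp
  also have "\<dots> = na (x - {#HA i#}) + 1" by (simp only: n_add) simp
  finally have p: "k \<ge> 1" using k(3) by linarith
  have s1: "set_mset ?t \<subseteq> haps A" using k(1) ij by (auto simp: haps_def dest: in_diffD)
  have e: "?t = add_mset (HC i j) (x - {#HA i#} - {#HB j#})" by simp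
  have d: "na (x - {#HA i#} - {#HB j#}) = na x - 1" "nb (x - {#HA i#} - {#HB j#}) = nb x - 1" "nc (x - {#HA i#} - {#HB j#}) = nc x"
    using n_del[OF h2] d1 by simp_all
  have s2: "na ?t = k - 1" "nb ?t = k - 1" "nc ?t = n - (k - 1)" "nc ?t = nc x + 1"
    unfolding e using d k p by simp_all
  have "k - 1 \<le> n" using k p by auto
  then show ?thesis using s1 s2 unfolding confN_def by blast
qed

lemma L4_sum: assumes A: "finite A" and x: "x \<in> confN A n"
  shows "(\<Sum>y\<in>{y. y \<in> confN A n \<and> nc y = b}. L4 A \<rho> x y) = (if b + 1 = nc x then \<rho>/2 * real (nc x) else 0)"
proof -
  have fY: "finite {y. y \<in> confN A n \<and> nc y = b}" using confN_fin[OF A] by simp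
  have "(\<Sum>y\<in>{y. y \<in> confN A n \<and> nc y = b}. L4 A \<rho> x y)
    = (\<Sum>i\<in>A. \<Sum>j\<in>A. if x - {#HC i j#} + {#HA i#} + {#HB j#} \<in> {y. y \<in> confN A n \<and> nc y = b}
          then \<rho>/2 * real (count x (HC i j)) else 0)"
    unfolding L4_def by (rule swap2[OF fY A])
  also have "\<dots> = (\<Sum>i\<in>A. \<Sum>j\<in>A. if b + 1 = nc x then \<rho>/2 * real (count x (HC i j)) else 0)"
  proof (intro sum.cong refl)
    fix i j assume ij: "i \<in> A" "j \<in> A"
    show "(if x - {#HC i j#} + {#HA i#} + {#HB j#} \<in> {y. y \<in> confN A n \<and> nc y = b}
          then \<rho>/2 * real (count x (HC i j)) else 0) = (if b + 1 = nc x then \<rho>/2 * real (count x (HC i j)) else 0)"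
    proof (cases "HC i j \<in># x")
      case True
      from t4_conf[OF x ij True] show ?thesis by auto
    qed (simp add: not_in_iff)
  qed
  also have "\<dots> = (if b + 1 = nc x then \<rho>/2 * (\<Sum>i\<in>A. \<Sum>j\<in>A. real (count x (HC i j))) else 0)"
    by (simp add: sum_distrib_left)
  also have "\<dots> = (if b + 1 = nc x then \<rho>/2 * real (nc x) else 0)"
    using sumA(3)[OF A] x by (simp add: confN_def)
  finally show ?thesis .
qed

lemma L5_sum: assumes A: "finite A" and x: "x \<in> confN A n"
  shows "(\<Sum>y\<in>{y. y \<in> confN A n \<and> nc y = b}. L5 A \<eta> x y) = (if b = nc x + 1 then 1/\<eta> * real (na x) * real (nb x) else 0)"
proof -
  have fY: "finite {y. y \<in> confN A n \<and> nc y = b}" using confN_fin[OF A] by simp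
  have "(\<Sum>y\<in>{y. y \<in> confN A n \<and> nc y = b}. L5 A \<eta> x y)
    = (\<Sum>i\<in>A. \<Sum>j\<in>A. if x - {#HA i#} - {#HB j#} + {#HC i j#} \<in> {y. y \<in> confN A n \<and> nc y = b}
          then 1/\<eta> * real (count x (HA i)) * real (count x (HB j)) else 0)"
    unfolding L5_def by (rule swap2[OF fY A])
  also have "\<dots> = (\<Sum>i\<in>A. \<Sum>j\<in>A. if b = nc x + 1 then 1/\<eta> * real (count x (HA i)) * real (count x (HB j)) else 0)"
  proof (intro sum.cong refl)
    fix i j assume ij: "i \<in> A" "j \<in> A"
    show "(if x - {#HA i#} - {#HB j#} + {#HC i j#} \<in> {y. y \<in> confN A n \<and> nc y = b}
          then 1/\<eta> * real (count x (HA i)) * real (count x (HB j)) else 0) = (if b = nc x + 1 then 1/\<eta> * real (count x (HA i)) * real (count x (HB j)) else 0)"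
    proof (cases "HA i \<in># x \<and> HB j \<in># x")
      case True
      from t5_conf[OF x ij] True show ?thesis by auto
    qed (auto simp: not_in_iff)
  qed
  also have "\<dots> = (if b = nc x + 1 then 1/\<eta> * (\<Sum>i\<in>A. real (count x (HA i))) * (\<Sum>j\<in>A. real (count x (HB j))) else 0)"
  proof -
    have "(\<Sum>i\<in>A. \<Sum>j\<in>A. 1/\<eta> * real (count x (HA i)) * real (count x (HB j)))
      = 1/\<eta> * ((\<Sum>i\<in>A. real (count x (HA i))) * (\<Sum>j\<in>A. real (count x (HB j))))"
    proof -
      have "(\<Sum>i\<in>A. \<Sum>j\<in>A. 1/\<eta> * real (count x (HA i)) * real (count x (HB j)))
        = 1/\<eta> * (\<Sum>i\<in>A. \<Sum>j\<in>A. real (count x (HA i)) * real (count x (HB j)))"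
        by (simp add: sum_distrib_left mult.assoc)
      also have "(\<Sum>i\<in>A. \<Sum>j\<in>A. real (count x (HA i)) * real (count x (HB j)))
         = (\<Sum>i\<in>A. real (count x (HA i))) * (\<Sum>j\<in>A. real (count x (HB j)))"
        by (rule sum_product[symmetric])
      finally show ?thesis .
    qed
    then show ?thesis by (auto simp: mult.assoc)
  qed
  also have "\<dots> = (if b = nc x + 1 then 1/\<eta> * real (na x) * real (nb x) else 0)"
    using sumA(1,2)[OF A] x by (simp add: confN_def)
  finally show ?thesis .
qed


lemma Gam_off: "b \<noteq> m \<Longrightarrow> Gam \<rho> n \<eta> m b = (if b + 1 = m then \<rho>/2 * real m else 0) + (if b = m + 1 then real ((n - m)^2) / \<eta> else 0)"
  unfolding Gam_def by auto

lemma Gam_row: assumes "m \<le> n"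
  shows "(\<Sum>b\<in>{0..n}-{m}. Gam \<rho> n \<eta> m b) = \<rho>/2 * real m + real ((n - m)^2) / \<eta>"
proof -
  have "(\<Sum>b\<in>{0..n}-{m}. Gam \<rho> n \<eta> m b) = (\<Sum>b\<in>{0..n}-{m}. (if b + 1 = m then \<rho>/2 * real m else 0))
     + (\<Sum>b\<in>{0..n}-{m}. (if b = m + 1 then real ((n - m)^2) / \<eta> else 0))"
    by (simp add: Gam_off sum.distrib)
  also have "(\<Sum>b\<in>{0..n}-{m}. (if b + 1 = m then \<rho>/2 * real m else 0)) = \<rho>/2 * real m"
  proof (cases m)
    case 0 then show ?thesis by simp
  next
    case (Suc m0)
    have "(\<Sum>b\<in>{0..n}-{m}. (if b + 1 = m then \<rho>/2 * real m else 0)) = (\<Sum>b\<in>{0..n}-{m}. (if b = m0 then \<rho>/2 * real m else 0))"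
      using Suc by (intro sum.cong) auto
    also have "\<dots> = \<rho>/2 * real m" using Suc assms by (subst sum.delta) auto
    finally show ?thesis .
  qed
  also have "(\<Sum>b\<in>{0..n}-{m}. (if b = m + 1 then real ((n - m)^2) / \<eta> else 0)) = real ((n - m)^2) / \<eta>"
  proof (cases "m + 1 \<le> n")
    case True then show ?thesis by (subst sum.delta) auto
  next
    case False then have "m = n" using assms by auto
    then show ?thesis by (subst sum.delta) auto
  qed
  finally show ?thesis .
qed

lemma lam_off_lump: assumes A: "finite A" and x: "x \<in> confN A n" and b: "b \<noteq> nc x"
  shows "(\<Sum>y\<in>{y. y \<in> confN A n \<and> nc y = b}. lam_off A P \<theta> \<rho> \<eta> x y) = Gam \<rho> n \<eta> (nc x) b"
proof -
  from x obtain k where k: "set_mset x \<subseteq> haps A" "k \<le> n" "na x = k" "nb x = k" "nc x = n - k"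
    unfolding confN_def by auto
  have "(\<Sum>y\<in>{y. y \<in> confN A n \<and> nc y = b}. lam_off A P \<theta> \<rho> \<eta> x y)
     = (\<Sum>y\<in>{y. y \<in> confN A n \<and> nc y = b}. L4 A \<rho> x y + L5 A \<eta> x y)"
    using b by (intro sum.cong refl) (auto simp: lam_off_split L1_0 L2_0 L3_0)
  also have "\<dots> = (if b + 1 = nc x then \<rho>/2 * real (nc x) else 0) + (if b = nc x + 1 then 1/\<eta> * real (na x) * real (nb x) else 0)"
    by (simp add: sum.distrib L4_sum[OF A x] L5_sum[OF A x])
  also have "\<dots> = Gam \<rho> n \<eta> (nc x) b"
    using b k by (simp add: Gam_off power2_eq_square)
  finally show ?thesis .
qed

lemma Lam_lump: assumes A: "finite A" and x: "x \<in> confN A n" and b: "b \<in> {0..n}"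
  shows "(\<Sum>y\<in>{y. y \<in> confN A n \<and> nc y = b}. Lam A P \<theta> \<rho> n \<eta> x y) = Gam \<rho> n \<eta> (nc x) b"
proof (cases "b = nc x")
  case False
  have "(\<Sum>y\<in>{y. y \<in> confN A n \<and> nc y = b}. Lam A P \<theta> \<rho> n \<eta> x y)
    = (\<Sum>y\<in>{y. y \<in> confN A n \<and> nc y = b}. lam_off A P \<theta> \<rho> \<eta> x y)"
    using False by (intro sum.cong refl) (auto simp: Lam_def)
  then show ?thesis using lam_off_lump[OF A x False] by simp
next
  case True
  let ?S = "confN A n" and ?m = "nc x"
  let ?f = "lam_off A P \<theta> \<rho> \<eta> x"
  have fS: "finite ?S" using confN_fin[OF A] .
  have fS2: "finite {y. y \<in> ?S \<and> nc y \<noteq> ?m}" using fS by simp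
  have mn: "?m \<le> n" using x by (auto simp: confN_def)
  have xY: "x \<in> {y. y \<in> ?S \<and> nc y = b}" using x True by simp
  have "(\<Sum>y\<in>{y. y \<in> ?S \<and> nc y = b}. Lam A P \<theta> \<rho> n \<eta> x y)
     = Lam A P \<theta> \<rho> n \<eta> x x + (\<Sum>y\<in>{y. y \<in> ?S \<and> nc y = b} - {x}. Lam A P \<theta> \<rho> n \<eta> x y)"
    using fS xY by (subst sum.remove[OF _ xY]) auto
  also have "(\<Sum>y\<in>{y. y \<in> ?S \<and> nc y = b} - {x}. Lam A P \<theta> \<rho> n \<eta> x y) = (\<Sum>y\<in>{y. y \<in> ?S \<and> nc y = b} - {x}. ?f y)"
    by (intro sum.cong refl) (auto simp: Lam_def)
  also have "Lam A P \<theta> \<rho> n \<eta> x x = - (\<Sum>y\<in>?S - {x}. ?f y)" by (simp add: Lam_def)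
  also have "?S - {x} = ({y. y \<in> ?S \<and> nc y = b} - {x}) \<union> {y. y \<in> ?S \<and> nc y \<noteq> ?m}" using True by auto
  also have "(\<Sum>y\<in>({y. y \<in> ?S \<and> nc y = b} - {x}) \<union> {y. y \<in> ?S \<and> nc y \<noteq> ?m}. ?f y)
     = (\<Sum>y\<in>{y. y \<in> ?S \<and> nc y = b} - {x}. ?f y) + (\<Sum>y\<in>{y. y \<in> ?S \<and> nc y \<noteq> ?m}. ?f y)"
    using fS True by (intro sum.union_disjoint) auto
  also have "(\<Sum>y\<in>{y. y \<in> ?S \<and> nc y \<noteq> ?m}. ?f y) = (\<Sum>c\<in>{0..n}-{?m}. \<Sum>y\<in>{y. y \<in> {y. y \<in> ?S \<and> nc y \<noteq> ?m} \<and> nc y = c}. ?f y)"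
    by (rule sum.group[symmetric, OF fS2]) (auto simp: confN_def)
  also have "\<dots> = (\<Sum>c\<in>{0..n}-{?m}. Gam \<rho> n \<eta> ?m c)"
  proof (intro sum.cong refl)
    fix c assume c: "c \<in> {0..n}-{?m}"
    have "{y. y \<in> {y. y \<in> ?S \<and> nc y \<noteq> ?m} \<and> nc y = c} = {y. y \<in> ?S \<and> nc y = c}" using c by auto
    then show "(\<Sum>y\<in>{y. y \<in> {y. y \<in> ?S \<and> nc y \<noteq> ?m} \<and> nc y = c}. ?f y) = Gam \<rho> n \<eta> ?m c"
      using lam_off_lump[OF A x, of c] c by simp
  qed
  also have "\<dots> = \<rho>/2 * real ?m + real ((n - ?m)^2) / \<eta>" using Gam_row[OF mn] .
  finally show ?thesis using True by (simp add: Gam_def)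
qed


definition lumps :: "'s set \<Rightarrow> 't set \<Rightarrow> ('s \<Rightarrow> 't) \<Rightarrow> ('s \<Rightarrow> 's \<Rightarrow> real) \<Rightarrow> ('t \<Rightarrow> 't \<Rightarrow> real) \<Rightarrow> bool" where
  "lumps S T f M N \<longleftrightarrow> (\<forall>x\<in>S. \<forall>b\<in>T. (\<Sum>y\<in>{y. y \<in> S \<and> f y = b}. M x y) = N (f x) b)"

lemma lumps_mid: assumes "finite S" "f ` S \<subseteq> T" shows "lumps S T f mid mid"
  unfolding lumps_def
proof (intro ballI)
  fix x b assume x: "x \<in> S" and b: "b \<in> T"
  have "(\<Sum>y\<in>{y. y \<in> S \<and> f y = b}. mid x y) = (\<Sum>y\<in>{y. y \<in> S \<and> f y = b}. if x = y then 1 else 0)"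
    by (simp add: mid_def)
  also have "\<dots> = mid (f x) b" using assms x by (subst sum.delta') (auto simp: mid_def)
  finally show "(\<Sum>y\<in>{y. y \<in> S \<and> f y = b}. mid x y) = mid (f x) b" .
qed

lemma lumps_mmult: assumes S: "finite S" and T: "finite T" and f: "f ` S \<subseteq> T"
  and 1: "lumps S T f M1 N1" and 2: "lumps S T f M2 N2"
  shows "lumps S T f (mmult S M1 M2) (mmult T N1 N2)"
  unfolding lumps_def
proof (intro ballI)
  fix x b assume x: "x \<in> S" and b: "b \<in> T"
  have fY: "finite {y. y \<in> S \<and> f y = b}" using S by simp
  have "(\<Sum>y\<in>{y. y \<in> S \<and> f y = b}. mmult S M1 M2 x y) = (\<Sum>z\<in>S. M1 x z * (\<Sum>y\<in>{y. y \<in> S \<and> f y = b}. M2 z y))"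
    unfolding mmult_def by (subst sum.swap) (simp add: sum_distrib_left)
  also have "\<dots> = (\<Sum>z\<in>S. M1 x z * N2 (f z) b)"
    using 2 b by (intro sum.cong refl) (simp add: lumps_def)
  also have "\<dots> = (\<Sum>c\<in>T. \<Sum>z\<in>{z. z \<in> S \<and> f z = c}. M1 x z * N2 (f z) b)"
    by (rule sum.group[symmetric, OF S T f])
  also have "\<dots> = (\<Sum>c\<in>T. (\<Sum>z\<in>{z. z \<in> S \<and> f z = c}. M1 x z) * N2 c b)"
    by (intro sum.cong refl) (simp add: sum_distrib_right)
  also have "\<dots> = (\<Sum>c\<in>T. N1 (f x) c * N2 c b)"
    using 1 x by (intro sum.cong refl) (simp add: lumps_def)
  finally show "(\<Sum>y\<in>{y. y \<in> S \<and> f y = b}. mmult S M1 M2 x y) = mmult T N1 N2 (f x) b"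
    by (simp add: mmult_def)
qed

lemma lumps_mpow: assumes S: "finite S" and T: "finite T" and f: "f ` S \<subseteq> T"
  and Q: "lumps S T f Q G"
  shows "lumps S T f (mpow S Q k) (mpow T G k)"
  by (induction k) (auto intro!: lumps_mid[OF S f] lumps_mmult[OF S T f] Q)

lemma mpow_bound: assumes S: "finite S"
  shows "\<forall>y\<in>S. \<bar>mpow S Q k x y\<bar> \<le> (real (card S) * (\<Sum>z\<in>S. \<Sum>w\<in>S. \<bar>Q z w\<bar>)) ^ k"
proof (induction k)
  case 0 then show ?case by (simp add: mid_def)
next
  case (Suc k)
  let ?B = "\<Sum>z\<in>S. \<Sum>w\<in>S. \<bar>Q z w\<bar>"
  let ?c = "real (card S) * ?B"
  have B: "\<bar>Q z w\<bar> \<le> ?B" if "z \<in> S" "w \<in> S" for z w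
  proof -
    have "\<bar>Q z w\<bar> \<le> (\<Sum>w\<in>S. \<bar>Q z w\<bar>)" using S that by (intro member_le_sum) auto
    also have "\<dots> \<le> ?B" using S that by (intro member_le_sum[where f = "\<lambda>z. \<Sum>w\<in>S. \<bar>Q z w\<bar>"]) (auto intro: sum_nonneg)
    finally show ?thesis .
  qed
  show ?case
  proof
    fix y assume y: "y \<in> S"
    have "\<bar>mpow S Q (Suc k) x y\<bar> \<le> (\<Sum>z\<in>S. \<bar>mpow S Q k x z\<bar> * \<bar>Q z y\<bar>)"
      by (simp add: mmult_def abs_mult[symmetric] sum_abs)
    also have "\<dots> \<le> (\<Sum>z\<in>S. ?c ^ k * ?B)"
      using Suc y B by (intro sum_mono mult_mono) auto
    also have "\<dots> = ?c ^ Suc k" by (simp add: mult_ac)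
    finally show "\<bar>mpow S Q (Suc k) x y\<bar> \<le> ?c ^ Suc k" .
  qed
qed

lemma mexp_summable: assumes S: "finite S" and y: "y \<in> S"
  shows "summable (\<lambda>k. s ^ k / fact k * mpow S Q k x y)"
proof -
  let ?c = "real (card S) * (\<Sum>z\<in>S. \<Sum>w\<in>S. \<bar>Q z w\<bar>)"
  have "summable (\<lambda>k. inverse (fact k) * (\<bar>s\<bar> * ?c) ^ k)" by (rule summable_exp)
  moreover have "norm (s ^ k / fact k * mpow S Q k x y) \<le> inverse (fact k) * (\<bar>s\<bar> * ?c) ^ k" for k
  proof -
    have "norm (s ^ k / fact k * mpow S Q k x y) = \<bar>s\<bar> ^ k / fact k * \<bar>mpow S Q k x y\<bar>"
      by (simp add: abs_mult power_abs)
    also have "\<dots> \<le> \<bar>s\<bar> ^ k / fact k * ?c ^ k"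
      using mpow_bound[OF S, of Q k x] y by (intro mult_left_mono) auto
    also have "\<dots> = inverse (fact k) * (\<bar>s\<bar> * ?c) ^ k" by (simp add: power_mult_distrib field_simps)
    finally show ?thesis .
  qed
  ultimately show ?thesis by (rule summable_comparison_test'[where N = 0])
qed

lemma lumps_mexp: assumes S: "finite S" and T: "finite T" and f: "f ` S \<subseteq> T"
  and Q: "lumps S T f Q G"
  shows "lumps S T f (mexp S Q s) (mexp T G s)"
  unfolding lumps_def
proof (intro ballI)
  fix x b assume x: "x \<in> S" and b: "b \<in> T"
  have "(\<Sum>y\<in>{y. y \<in> S \<and> f y = b}. mexp S Q s x y) = (\<Sum>k. \<Sum>y\<in>{y. y \<in> S \<and> f y = b}. s ^ k / fact k * mpow S Q k x y)"
    unfolding mexp_def by (rule suminf_sum[symmetric]) (rule mexp_summable[OF S], simp)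
  also have "\<dots> = (\<Sum>k. s ^ k / fact k * mpow T G k (f x) b)"
  proof (rule suminf_cong)
    fix k
    have "(\<Sum>y\<in>{y. y \<in> S \<and> f y = b}. s ^ k / fact k * mpow S Q k x y)
       = s ^ k / fact k * (\<Sum>y\<in>{y. y \<in> S \<and> f y = b}. mpow S Q k x y)"
      by (simp add: sum_distrib_left)
    also have "\<dots> = s ^ k / fact k * mpow T G k (f x) b"
      using lumps_mpow[OF S T f Q, of k] x b unfolding lumps_def by simp
    finally show "(\<Sum>y\<in>{y. y \<in> S \<and> f y = b}. s ^ k / fact k * mpow S Q k x y) = s ^ k / fact k * mpow T G k (f x) b" .
  qed
  finally show "(\<Sum>y\<in>{y. y \<in> S \<and> f y = b}. mexp S Q s x y) = mexp T G s (f x) b"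
    by (simp add: mexp_def)
qed

lemma lumps_ptrans: assumes S: "finite S" and T: "finite T" and f: "f ` S \<subseteq> T"
  and Q: "\<And>d. lumps S T f (Q d) (G d)"
  shows "lumps S T f (ptrans S Q D t u v) (ptrans T G D t u v)"
proof -
  have "lumps S T f (foldr (\<lambda>d M. mmult S (mexp S (Q d) (elen D t d u v)) M) ds mid)
          (foldr (\<lambda>d M. mmult T (mexp T (G d) (elen D t d u v)) M) ds mid)" for ds
    by (induction ds) (auto intro!: lumps_mid[OF S f] lumps_mmult[OF S T f] lumps_mexp[OF S T f] Q)
  then show ?thesis unfolding ptrans_def .
qed


lemma peel:
  fixes g :: "'s \<Rightarrow> real" and p :: "nat \<Rightarrow> 's \<Rightarrow> 's \<Rightarrow> real" and q :: "nat \<Rightarrow> 't \<Rightarrow> 't \<Rightarrow> real"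
    and C :: "'t \<Rightarrow> 's set"
  assumes fin: "\<And>b. finite (C b)"
  shows "(\<And>i y. i < K \<Longrightarrow> y \<in> C (c i) \<Longrightarrow> (\<Sum>z\<in>C (c (Suc i)). p i y z) = q i (c i) (c (Suc i))) \<Longrightarrow>
    (\<Sum>x\<in>PiE {..K} (\<lambda>i. C (c i)). g (x 0) * (\<Prod>i<K. p i (x i) (x (Suc i))))
     = (\<Sum>y\<in>C (c 0). g y) * (\<Prod>i<K. q i (c i) (c (Suc i)))"
proof (induction K)
  case 0
  have "bij_betw (\<lambda>x. x 0) (PiE {..0} (\<lambda>i. C (c i))) (C (c 0))"
    unfolding bij_betw_def
  proof
    show "inj_on (\<lambda>x. x 0) (PiE {..0} (\<lambda>i. C (c i)))"
      by (auto simp: inj_on_def intro: PiE_ext)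
    show "(\<lambda>x. x 0) ` (PiE {..0} (\<lambda>i. C (c i))) = C (c 0)"
    proof
      show "(\<lambda>x. x 0) ` (PiE {..0} (\<lambda>i. C (c i))) \<subseteq> C (c 0)" by auto
      show "C (c 0) \<subseteq> (\<lambda>x. x 0) ` (PiE {..0} (\<lambda>i. C (c i)))"
      proof
        fix y assume y: "y \<in> C (c 0)"
        have "(\<lambda>i. if i = 0 then y else undefined) \<in> PiE {..0} (\<lambda>i. C (c i))" using y by (auto simp: PiE_def extensional_def)
        then show "y \<in> (\<lambda>x. x 0) ` (PiE {..0} (\<lambda>i. C (c i)))" by (rule rev_image_eqI) simp
      qed
    qed
  qed
  then have "(\<Sum>x\<in>PiE {..0} (\<lambda>i. C (c i)). g (x 0)) = (\<Sum>y\<in>C (c 0). g y)"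
    by (rule sum.reindex_bij_betw)
  then show ?case by simp
next
  case (Suc K)
  let ?P = "PiE {..K} (\<lambda>i. C (c i))"
  let ?F = "\<lambda>x. g (x 0) * (\<Prod>i<K. p i (x i) (x (Suc i)))"
  have IH: "(\<Sum>x\<in>?P. ?F x) = (\<Sum>y\<in>C (c 0). g y) * (\<Prod>i<K. q i (c i) (c (Suc i)))"
    using Suc by auto
  have e: "{..Suc K} = insert (Suc K) {..K}" by auto
  have ni: "Suc K \<notin> {..K}" by simp
  have "(\<Sum>x\<in>PiE {..Suc K} (\<lambda>i. C (c i)). g (x 0) * (\<Prod>i<Suc K. p i (x i) (x (Suc i))))
     = (\<Sum>(y,h)\<in>C (c (Suc K)) \<times> ?P. g ((h(Suc K := y)) 0) * (\<Prod>i<Suc K. p i ((h(Suc K := y)) i) ((h(Suc K := y)) (Suc i))))"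
    unfolding e PiE_insert_eq by (subst sum.reindex[OF inj_combinator[OF ni]]) (simp add: case_prod_beta)
  also have "\<dots> = (\<Sum>(y,h)\<in>C (c (Suc K)) \<times> ?P. ?F h * p K (h K) y)"
    by (intro sum.cong refl) (auto simp: mult.assoc intro!: prod.cong)
  also have "\<dots> = (\<Sum>h\<in>?P. \<Sum>y\<in>C (c (Suc K)). ?F h * p K (h K) y)"
    by (subst sum.cartesian_product[symmetric]) (rule sum.swap)
  also have "\<dots> = (\<Sum>h\<in>?P. ?F h * q K (c K) (c (Suc K)))"
  proof (intro sum.cong refl)
    fix h assume h: "h \<in> ?P"
    then have "h K \<in> C (c K)" by auto
    then have "(\<Sum>y\<in>C (c (Suc K)). p K (h K) y) = q K (c K) (c (Suc K))" using Suc.prems by auto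
    then show "(\<Sum>y\<in>C (c (Suc K)). ?F h * p K (h K) y) = ?F h * q K (c K) (c (Suc K))"
      by (simp add: sum_distrib_left[symmetric])
  qed
  also have "\<dots> = (\<Sum>h\<in>?P. ?F h) * q K (c K) (c (Suc K))" by (simp add: sum_distrib_right)
  also have "\<dots> = (\<Sum>y\<in>C (c 0). g y) * (\<Prod>i<Suc K. q i (c i) (c (Suc i)))" by (simp add: IH mult.assoc)
  finally show ?case .
qed


lemma chain_le: assumes "\<forall>i<K. (s::nat\<Rightarrow>real) i \<le> s (Suc i)" "i \<le> K"
  shows "s 0 \<le> s i" "s i \<le> s K"
proof -
  show "s 0 \<le> s i" using assms(2)
  proof (induction i)
    case (Suc i) then show ?case using assms(1) by (meson Suc_le_lessD dual_order.trans less_imp_le_nat)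
  qed simp
  show "s i \<le> s K" using assms(2)
  proof (induction rule: dec_induct)
    case (step m) then show ?case using assms(1) by (meson dual_order.trans)
  qed simp
qed

lemma fdd_lump:
  fixes X :: "real \<Rightarrow> 'w \<Rightarrow> 's" and f :: "'s \<Rightarrow> 't"
  assumes S: "finite S" and T: "finite T" and f: "f ` S \<subseteq> T"
    and Q: "\<And>d. lumps S T f (Q d) (G d)"
    and Pr: "prob_space Pr"
    and Xval: "\<forall>s\<in>{T0..0}. \<forall>\<omega>\<in>space Pr. X s \<omega> \<in> S"
    and Xmeas: "\<forall>s\<in>{T0..0}. \<forall>x. {\<omega> \<in> space Pr. X s \<omega> = x} \<in> sets Pr"
    and M: "markov_fdd Pr S Q D t T0 X"
  shows "markov_fdd Pr T G D t T0 (\<lambda>s \<omega>. f (X s \<omega>))"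
  unfolding markov_fdd_def
proof (intro allI impI)
  interpret prob_space Pr by (rule Pr)
  fix K and s :: "nat \<Rightarrow> real" and c :: "nat \<Rightarrow> 't"
  assume H: "T0 \<le> s 0 \<and> s K \<le> 0 \<and> (\<forall>i<K. s i \<le> s (Suc i)) \<and> (\<forall>i\<le>K. c i \<in> T)"
  let ?C = "\<lambda>b. {y. y \<in> S \<and> f y = b}"
  let ?PE = "PiE {..K} (\<lambda>i. ?C (c i))"
  let ?F = "\<lambda>x. {\<omega> \<in> space Pr. \<forall>i\<le>K. X (s i) \<omega> = x i}"
  have sr: "s i \<in> {T0..0}" if "i \<le> K" for i
    using chain_le[of K s i] H that by auto
  have fPE: "finite ?PE" using S by (intro finite_PiE) auto
  have Fmeas: "?F x \<in> sets Pr" for x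
  proof -
    have mem: "{\<omega> \<in> space Pr. \<forall>i\<in>{..K}. X (s i) \<omega> = x i} \<in> sets Pr"
    proof (rule sets.sets_Collect_finite_All)
      fix i assume "i \<in> {..K}"
      then have "s i \<in> {T0..0}" using sr by simp
      then show "{\<omega> \<in> space Pr. X (s i) \<omega> = x i} \<in> sets Pr" using Xmeas by blast
    qed simp
    have eq: "{\<omega> \<in> space Pr. \<forall>i\<in>{..K}. X (s i) \<omega> = x i} = ?F x" by auto
    show ?thesis using mem unfolding eq .
  qed
  have ev: "{\<omega> \<in> space Pr. \<forall>i\<le>K. f (X (s i) \<omega>) = c i} = (\<Union>x\<in>?PE. ?F x)"
  proof
    show "{\<omega> \<in> space Pr. \<forall>i\<le>K. f (X (s i) \<omega>) = c i} \<subseteq> (\<Union>x\<in>?PE. ?F x)"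
    proof
      fix \<omega> assume w: "\<omega> \<in> {\<omega> \<in> space Pr. \<forall>i\<le>K. f (X (s i) \<omega>) = c i}"
      let ?x = "restrict (\<lambda>i. X (s i) \<omega>) {..K}"
      have "?x \<in> ?PE" using w Xval sr by auto
      moreover have "\<omega> \<in> ?F ?x" using w by auto
      ultimately show "\<omega> \<in> (\<Union>x\<in>?PE. ?F x)" by blast
    qed
    show "(\<Union>x\<in>?PE. ?F x) \<subseteq> {\<omega> \<in> space Pr. \<forall>i\<le>K. f (X (s i) \<omega>) = c i}"
      by (auto simp: PiE_def Pi_def)
  qed
  have disj: "disjoint_family_on ?F ?PE"
    unfolding disjoint_family_on_def
  proof (intro ballI impI)
    fix x y assume x: "x \<in> ?PE" and y: "y \<in> ?PE" and ne: "x \<noteq> y"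
    obtain i where "i \<le> K" "x i \<noteq> y i" using PiE_ext[OF x y] ne by blast
    then show "?F x \<inter> ?F y = {}" by auto
  qed
  have "measure Pr {\<omega> \<in> space Pr. \<forall>i\<le>K. f (X (s i) \<omega>) = c i} = (\<Sum>x\<in>?PE. measure Pr (?F x))"
    unfolding ev by (rule finite_measure_finite_Union[OF fPE _ disj]) (rule image_subsetI, rule Fmeas)
  also have "\<dots> = (\<Sum>x\<in>?PE. measure Pr {\<omega> \<in> space Pr. X (s 0) \<omega> = x 0}
          * (\<Prod>i<K. ptrans S Q D t (s i) (s (Suc i)) (x i) (x (Suc i))))"
  proof (intro sum.cong refl)
    fix x assume x: "x \<in> ?PE"
    then have "\<forall>i\<le>K. x i \<in> S" by auto
    then have "T0 \<le> s 0 \<and> s K \<le> 0 \<and> (\<forall>i<K. s i \<le> s (Suc i)) \<and> (\<forall>i\<le>K. x i \<in> S)" using H by blast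
    then show "measure Pr (?F x) = measure Pr {\<omega> \<in> space Pr. X (s 0) \<omega> = x 0}
          * (\<Prod>i<K. ptrans S Q D t (s i) (s (Suc i)) (x i) (x (Suc i)))"
      by (rule M[unfolded markov_fdd_def, rule_format])
  qed
  also have "\<dots> = (\<Sum>y\<in>?C (c 0). measure Pr {\<omega> \<in> space Pr. X (s 0) \<omega> = y})
        * (\<Prod>i<K. ptrans T G D t (s i) (s (Suc i)) (c i) (c (Suc i)))"
  proof (rule peel)
    show "finite (?C b)" for b using S by simp
    fix i y assume i: "i < K" and y: "y \<in> ?C (c i)"
    have "c (Suc i) \<in> T" using H i by auto
    then show "(\<Sum>z\<in>?C (c (Suc i)). ptrans S Q D t (s i) (s (Suc i)) y z) = ptrans T G D t (s i) (s (Suc i)) (c i) (c (Suc i))"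
      using lumps_ptrans[OF S T f Q, where D=D and t=t and u="s i" and v="s (Suc i)"] y unfolding lumps_def by auto
  qed
  also have "(\<Sum>y\<in>?C (c 0). measure Pr {\<omega> \<in> space Pr. X (s 0) \<omega> = y}) = measure Pr {\<omega> \<in> space Pr. f (X (s 0) \<omega>) = c 0}"
  proof -
    have s0: "s 0 \<in> {T0..0}" using sr by auto
    have "{\<omega> \<in> space Pr. f (X (s 0) \<omega>) = c 0} = (\<Union>y\<in>?C (c 0). {\<omega> \<in> space Pr. X (s 0) \<omega> = y})"
      using Xval s0 by auto
    moreover have "measure Pr (\<Union>y\<in>?C (c 0). {\<omega> \<in> space Pr. X (s 0) \<omega> = y}) = (\<Sum>y\<in>?C (c 0). measure Pr {\<omega> \<in> space Pr. X (s 0) \<omega> = y})"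
      by (rule finite_measure_finite_Union) (use S Xmeas s0 in \<open>auto simp: disjoint_family_on_def\<close>)
    ultimately show ?thesis by simp
  qed
  finally show "measure Pr {\<omega> \<in> space Pr. \<forall>i\<le>K. f (X (s i) \<omega>) = c i} =
       measure Pr {\<omega> \<in> space Pr. f (X (s 0) \<omega>) = c 0} * (\<Prod>i<K. ptrans T G D t (s i) (s (Suc i)) (c i) (c (Suc i)))" .
qed


lemma mmult_assoc: "mmult S (mmult S A B) C x y = mmult S A (mmult S B C) x y"
proof -
  have "mmult S (mmult S A B) C x y = (\<Sum>z\<in>S. \<Sum>w\<in>S. A x w * B w z * C z y)"
    unfolding mmult_def by (simp add: sum_distrib_right)
  also have "\<dots> = (\<Sum>w\<in>S. \<Sum>z\<in>S. A x w * B w z * C z y)" by (rule sum.swap)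
  also have "\<dots> = mmult S A (mmult S B C) x y"
    unfolding mmult_def by (simp add: sum_distrib_left mult.assoc)
  finally show ?thesis .
qed

lemma mmult_cong: "(\<And>z. z \<in> S \<Longrightarrow> A x z = A' x z) \<Longrightarrow> (\<And>z. z \<in> S \<Longrightarrow> B z y = B' z y) \<Longrightarrow> mmult S A B x y = mmult S A' B' x y"
  unfolding mmult_def by (intro sum.cong) auto

lemma mpow_Suc': assumes S: "finite S" and x: "x \<in> S" and y: "y \<in> S"
  shows "mpow S Q (Suc k) x y = mmult S Q (mpow S Q k) x y"
  using x y
proof (induction k arbitrary: x y)
  case 0
  have "mmult S mid Q x y = (\<Sum>z\<in>S. if x = z then Q z y else 0)"
    unfolding mmult_def by (intro sum.cong) (auto simp: mid_def)
  then have "mmult S mid Q x y = Q x y" using S 0 by (simp add: sum.delta')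
  moreover have "mmult S Q mid x y = (\<Sum>z\<in>S. if z = y then Q x z else 0)"
    unfolding mmult_def by (intro sum.cong) (auto simp: mid_def)
  then have "mmult S Q mid x y = Q x y" using S 0 by (simp add: sum.delta)
  ultimately show ?case by simp
next
  case (Suc k)
  have "mpow S Q (Suc (Suc k)) x y = mmult S (mpow S Q (Suc k)) Q x y" by simp
  also have "\<dots> = mmult S (mmult S Q (mpow S Q k)) Q x y"
    using Suc by (intro mmult_cong) auto
  also have "\<dots> = mmult S Q (mmult S (mpow S Q k) Q) x y" by (rule mmult_assoc)
  also have "\<dots> = mmult S Q (mpow S Q (Suc k)) x y" by simp
  finally show ?case .
qed

lemma mpow_sym: assumes S: "finite S" and G: "\<forall>m\<in>S. \<forall>m'\<in>S. \<gamma> m * G m m' = \<gamma> m' * G m' m"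
  shows "m \<in> S \<Longrightarrow> m' \<in> S \<Longrightarrow> \<gamma> m * mpow S G k m m' = \<gamma> m' * mpow S G k m' m"
proof (induction k arbitrary: m m')
  case 0 then show ?case by (auto simp: mid_def)
next
  case (Suc k)
  have "\<gamma> m * mpow S G (Suc k) m m' = \<gamma> m * (\<Sum>z\<in>S. G m z * mpow S G k z m')"
    using mpow_Suc'[OF S Suc.prems] by (simp add: mmult_def)
  also have "\<dots> = (\<Sum>z\<in>S. (\<gamma> m * G m z) * mpow S G k z m')" by (simp add: sum_distrib_left mult.assoc)
  also have "\<dots> = (\<Sum>z\<in>S. G z m * (\<gamma> z * mpow S G k z m'))"
    using G Suc.prems by (intro sum.cong refl) (auto simp: mult_ac)
  also have "\<dots> = (\<Sum>z\<in>S. G z m * (\<gamma> m' * mpow S G k m' z))"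
    using Suc.IH Suc.prems by (intro sum.cong refl) auto
  also have "\<dots> = \<gamma> m' * (\<Sum>z\<in>S. mpow S G k m' z * G z m)" by (simp add: sum_distrib_left mult_ac)
  also have "\<dots> = \<gamma> m' * mpow S G (Suc k) m' m" by (simp add: mmult_def)
  finally show ?case .
qed

lemma mexp_sym: assumes S: "finite S" and G: "\<forall>m\<in>S. \<forall>m'\<in>S. \<gamma> m * G m m' = \<gamma> m' * G m' m"
  and m: "m \<in> S" and m': "m' \<in> S"
  shows "\<gamma> m * mexp S G s m m' = \<gamma> m' * mexp S G s m' m"
proof -
  have "\<gamma> m * mexp S G s m m' = (\<Sum>k. \<gamma> m * (s ^ k / fact k * mpow S G k m m'))"
    unfolding mexp_def by (rule suminf_mult[symmetric]) (rule mexp_summable[OF S m'])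
  also have "\<dots> = (\<Sum>k. \<gamma> m' * (s ^ k / fact k * mpow S G k m' m))"
  proof (rule suminf_cong)
    fix k
    have "\<gamma> m * mpow S G k m m' = \<gamma> m' * mpow S G k m' m" using mpow_sym[OF S G m m'] .
    then show "\<gamma> m * (s ^ k / fact k * mpow S G k m m') = \<gamma> m' * (s ^ k / fact k * mpow S G k m' m)"
      by (metis mult.left_commute)
  qed
  also have "\<dots> = \<gamma> m' * mexp S G s m' m"
    unfolding mexp_def by (rule suminf_mult) (rule mexp_summable[OF S m])
  finally show ?thesis .
qed

lemma Gam_alt: "Gam \<rho> n \<eta> m m' = (if m = m' + 1 then \<rho>/2 * real m else 0) + (if m + 1 = m' then real ((n - m)^2) / \<eta> else 0)
   + (if m = m' then - (\<rho>/2 * real m + real ((n - m)^2) / \<eta>) else 0)"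
  unfolding Gam_def by auto

lemma Gam_col: assumes "m' \<le> n"
  shows "(\<Sum>m\<in>{0..n}. \<gamma> m * Gam \<rho> n \<eta> m m') =
    (if m' \<ge> 1 then \<gamma> (m' - 1) * (real ((n - (m' - 1))^2) / \<eta>) else 0)
    + (if m' + 1 \<le> n then \<gamma> (m' + 1) * (\<rho>/2 * real (m' + 1)) else 0)
    - \<gamma> m' * (\<rho>/2 * real m' + real ((n - m')^2) / \<eta>)"
proof -
  have "(\<Sum>m\<in>{0..n}. \<gamma> m * Gam \<rho> n \<eta> m m') =
     (\<Sum>m\<in>{0..n}. if m = m' + 1 then \<gamma> m * (\<rho>/2 * real m) else 0)
   + (\<Sum>m\<in>{0..n}. if m + 1 = m' then \<gamma> m * (real ((n - m)^2) / \<eta>) else 0)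
   + (\<Sum>m\<in>{0..n}. if m = m' then - (\<gamma> m * (\<rho>/2 * real m + real ((n - m)^2) / \<eta>)) else 0)"
    unfolding sum.distrib[symmetric] by (intro sum.cong refl) (simp add: Gam_alt ring_distribs)
  also have "(\<Sum>m\<in>{0..n}. if m = m' + 1 then \<gamma> m * (\<rho>/2 * real m) else 0)
     = (if m' + 1 \<le> n then \<gamma> (m' + 1) * (\<rho>/2 * real (m' + 1)) else 0)"
    by (subst sum.delta) auto
  also have "(\<Sum>m\<in>{0..n}. if m + 1 = m' then \<gamma> m * (real ((n - m)^2) / \<eta>) else 0)
     = (if m' \<ge> 1 then \<gamma> (m' - 1) * (real ((n - (m' - 1))^2) / \<eta>) else 0)"
  proof (cases m')
    case (Suc j)
    have "(\<Sum>m\<in>{0..n}. if m + 1 = m' then \<gamma> m * (real ((n - m)^2) / \<eta>) else 0)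
        = (\<Sum>m\<in>{0..n}. if m = j then \<gamma> m * (real ((n - m)^2) / \<eta>) else 0)"
      using Suc by (intro sum.cong) auto
    also have "\<dots> = \<gamma> j * (real ((n - j)^2) / \<eta>)" using Suc assms by (subst sum.delta) auto
    finally show ?thesis using Suc by simp
  qed simp
  also have "(\<Sum>m\<in>{0..n}. if m = m' then - (\<gamma> m * (\<rho>/2 * real m + real ((n - m)^2) / \<eta>)) else 0)
     = - (\<gamma> m' * (\<rho>/2 * real m' + real ((n - m')^2) / \<eta>))"
    using assms by (subst sum.delta) auto
  finally show ?thesis by simp
qed

lemma Gam_db: assumes st: "\<forall>m'\<in>{0..n}. (\<Sum>m\<in>{0..n}. \<gamma> m * Gam \<rho> n \<eta> m m') = 0"
  shows "j < n \<Longrightarrow> \<gamma> j * (real ((n - j)^2) / \<eta>) = \<gamma> (Suc j) * (\<rho>/2 * real (Suc j))"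
proof (induction j)
  case 0
  have "(\<Sum>m\<in>{0..n}. \<gamma> m * Gam \<rho> n \<eta> m 0) = 0" using st by auto
  then show ?case using Gam_col[of 0 n \<gamma> \<rho> \<eta>] 0 by simp
next
  case (Suc j)
  have z: "(\<Sum>m\<in>{0..n}. \<gamma> m * Gam \<rho> n \<eta> m (Suc j)) = 0" using st Suc by auto
  have h1: "1 \<le> Suc j" by simp
  have h2: "Suc j + 1 \<le> n" using Suc.prems by simp
  have e1: "Suc j - 1 = j" by simp
  have e2: "Suc j + 1 = Suc (Suc j)" by simp
  have eq: "\<gamma> j * (real ((n - j)^2) / \<eta>) + \<gamma> (Suc (Suc j)) * (\<rho>/2 * real (Suc (Suc j)))
     - \<gamma> (Suc j) * (\<rho>/2 * real (Suc j) + real ((n - Suc j)^2) / \<eta>) = 0"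
    using Gam_col[of "Suc j" n \<gamma> \<rho> \<eta>] Suc.prems z unfolding if_P[OF h1] if_P[OF h2] e1 e2 by simp
  have d: "\<gamma> (Suc j) * (\<rho>/2 * real (Suc j) + real ((n - Suc j)^2) / \<eta>)
     = \<gamma> (Suc j) * (\<rho>/2 * real (Suc j)) + \<gamma> (Suc j) * (real ((n - Suc j)^2) / \<eta>)" by (rule distrib_left)
  have IH: "\<gamma> j * (real ((n - j)^2) / \<eta>) = \<gamma> (Suc j) * (\<rho>/2 * real (Suc j))" using Suc by simp
  show ?case using eq d IH by linarith
qed

lemma Gam_sym: assumes st: "\<forall>m'\<in>{0..n}. (\<Sum>m\<in>{0..n}. \<gamma> m * Gam \<rho> n \<eta> m m') = 0"
  shows "\<forall>m\<in>{0..n}. \<forall>m'\<in>{0..n}. \<gamma> m * Gam \<rho> n \<eta> m m' = \<gamma> m' * Gam \<rho> n \<eta> m' m"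
proof (intro ballI)
  fix m m' assume m: "m \<in> {0..n}" and m': "m' \<in> {0..n}"
  show "\<gamma> m * Gam \<rho> n \<eta> m m' = \<gamma> m' * Gam \<rho> n \<eta> m' m"
  proof (cases "m' = m + 1")
    case True
    then show ?thesis using Gam_db[OF st, of m] m' by (simp add: Gam_def)
  next
    case False
    show ?thesis
    proof (cases "m = m' + 1")
      case True
      then show ?thesis using Gam_db[OF st, of m'] m by (simp add: Gam_def)
    next
      case False
      with \<open>m' \<noteq> m + 1\<close> show ?thesis by (auto simp: Gam_def)
    qed
  qed
qed

theorem mainTheorem2:
  fixes A :: "'a set" and P :: "'a \<Rightarrow> 'a \<Rightarrow> real"
    and \<theta> \<rho> :: real and n D :: nat
    and t \<eta> :: "int \<Rightarrow> real"
    and Pr :: "'w measure" and T0 :: real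
    and M :: "real \<Rightarrow> 'w \<Rightarrow> 'a hap multiset"
  assumes A: "finite A" "A \<noteq> {}"
    and P: "\<forall>i\<in>A. \<forall>j\<in>A. P i j \<ge> 0" "\<forall>i\<in>A. (\<Sum>j\<in>A. P i j) = 1"
    and \<theta>: "\<theta> \<ge> 0" and \<rho>: "\<rho> \<ge> 0" and n: "n \<ge> 1"
    and D: "D \<ge> 1"
    and t: "t 0 = 0" "\<forall>d. - int D + 1 \<le> d \<and> d < 0 \<longrightarrow> t d < t (d + 1)"
    and \<eta>: "\<forall>d. - int D \<le> d \<and> d \<le> -1 \<longrightarrow> \<eta> d > 0"
    and Pr: "prob_space Pr" and T0: "T0 \<le> 0"
    and Mval: "\<forall>s\<in>{T0..0}. \<forall>\<omega>\<in>space Pr. M s \<omega> \<in> confN A n"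
    and Mmeas: "\<forall>s\<in>{T0..0}. \<forall>x. {\<omega> \<in> space Pr. M s \<omega> = x} \<in> sets Pr"
    and Mmarkov: "markov_fdd Pr (confN A n) (\<lambda>d. Lam A P \<theta> \<rho> n (\<eta> d)) D t T0 M"
  shows "markov_fdd Pr {0..n} (\<lambda>d. Gam \<rho> n (\<eta> d)) D t T0 (\<lambda>s \<omega>. nc (M s \<omega>))
   \<and> (\<rho> > 0 \<longrightarrow>
       (\<forall>d. - int D \<le> d \<and> d \<le> -1 \<longrightarrow>
         (\<forall>\<gamma> :: nat \<Rightarrow> real.
            (\<forall>m\<in>{0..n}. \<gamma> m \<ge> 0) \<and> (\<Sum>m\<in>{0..n}. \<gamma> m) = 1
            \<and> (\<forall>m'\<in>{0..n}. (\<Sum>m\<in>{0..n}. \<gamma> m * Gam \<rho> n (\<eta> d) m m') = 0)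
            \<longrightarrow> (\<forall>m\<in>{0..n}. \<forall>m'\<in>{0..n}. \<forall>s\<ge>0.
                  \<gamma> m * mexp {0..n} (Gam \<rho> n (\<eta> d)) s m m'
                  = \<gamma> m' * mexp {0..n} (Gam \<rho> n (\<eta> d)) s m' m))))"
proof (rule conjI)
  have S: "finite (confN A n)" using confN_fin[OF A(1)] .
  have f: "nc ` confN A n \<subseteq> {0..n}" by (auto simp: confN_def)
  have Q: "lumps (confN A n) {0..n} nc (Lam A P \<theta> \<rho> n (\<eta> d)) (Gam \<rho> n (\<eta> d))" for d
    unfolding lumps_def using Lam_lump[OF A(1)] by blast
  show "markov_fdd Pr {0..n} (\<lambda>d. Gam \<rho> n (\<eta> d)) D t T0 (\<lambda>s \<omega>. nc (M s \<omega>))"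
    by (rule fdd_lump[OF S _ f Q Pr Mval Mmeas Mmarkov]) simp
next
  show "\<rho> > 0 \<longrightarrow>
       (\<forall>d. - int D \<le> d \<and> d \<le> -1 \<longrightarrow>
         (\<forall>\<gamma> :: nat \<Rightarrow> real.
            (\<forall>m\<in>{0..n}. \<gamma> m \<ge> 0) \<and> (\<Sum>m\<in>{0..n}. \<gamma> m) = 1
            \<and> (\<forall>m'\<in>{0..n}. (\<Sum>m\<in>{0..n}. \<gamma> m * Gam \<rho> n (\<eta> d) m m') = 0)
            \<longrightarrow> (\<forall>m\<in>{0..n}. \<forall>m'\<in>{0..n}. \<forall>s\<ge>0.
                  \<gamma> m * mexp {0..n} (Gam \<rho> n (\<eta> d)) s m m'
                  = \<gamma> m' * mexp {0..n} (Gam \<rho> n (\<eta> d)) s m' m)))"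
  proof (intro impI allI ballI)
    fix d :: int and \<gamma> :: "nat \<Rightarrow> real" and m m' :: nat and s :: real
    assume H: "(\<forall>m\<in>{0..n}. \<gamma> m \<ge> 0) \<and> (\<Sum>m\<in>{0..n}. \<gamma> m) = 1
            \<and> (\<forall>m'\<in>{0..n}. (\<Sum>m\<in>{0..n}. \<gamma> m * Gam \<rho> n (\<eta> d) m m') = 0)"
      and m: "m \<in> {0..n}" and m': "m' \<in> {0..n}"
    have G: "\<forall>m\<in>{0..n}. \<forall>m'\<in>{0..n}. \<gamma> m * Gam \<rho> n (\<eta> d) m m' = \<gamma> m' * Gam \<rho> n (\<eta> d) m' m"
      using Gam_sym H by blast
    show "\<gamma> m * mexp {0..n} (Gam \<rho> n (\<eta> d)) s m m' = \<gamma> m' * mexp {0..n} (Gam \<rho> n (\<eta> d)) s m' m"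
      by (rule mexp_sym[OF _ G m m']) simp
  qed
qed

end
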